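(* For each positive integer $k$ and each $n\in\mathbb{Z}$, $$f(n-k, x, q^k s) = \frac{1}{v(k)} \big(f(k-1, x, qs) f(n, x, s) - f(k, x, s) f(n-1, x, qs)\big),\qquad v(k) = (-1)^k q^{\binom{k}{2}} s^{k-1}.$$
   Context: Let $x,s,q$ be indeterminates; all quantities live in the field of rational functions in $x,s,q$. The Carlitz $q$-Fibonacci polynomials $f(n,x,s)$ are defined by $f(0,x,s)=0$, $f(1,x,s)=1$ and $f(n, x, s) = x f(n-1, x, s) + q^{n-2} s f(n-2, x, s)$; this recurrence is required to hold for all $n\in\mathbb{Z}$, which uniquely extends $f(n,x,s)$ to negative $n$. Here $f(n,x,q^a s)$ means $f(n,x,s)$ with $s$ replaced by $q^a s$. *)

theory Defs
  imports Complex_Main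
begin

definition carlitz_fib :: "'a::field \<Rightarrow> int \<Rightarrow> 'a \<Rightarrow> 'a \<Rightarrow> 'a" where
  "carlitz_fib q n x s =
     (THE g :: int \<Rightarrow> 'a. g 0 = 0 \<and> g 1 = 1 \<and>
        (\<forall>m. g m = x * g (m - 1) + q powi (m - 2) * s * g (m - 2))) n"

definition carlitz_v :: "'a::field \<Rightarrow> 'a \<Rightarrow> nat \<Rightarrow> 'a" where
  "carlitz_v q s k = (-1) ^ k * q ^ (k choose 2) * s ^ (k - 1)"

end

theory Submission
  imports Defs
begin

lemma rec_unique:
  fixes d :: "int \<Rightarrow> 'a::field"
  assumes r: "\<And>m. d m = x * d (m-1) + c m * d (m-2)" and c: "\<And>m. c m \<noteq> 0"
    and a0: "d a = 0" and a1: "d (a+1) = 0"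
  shows "d n = 0"
proof -
  have fwd: "d (a + int j) = 0 \<and> d (a + int j + 1) = 0" for j
  proof (induction j)
    case 0 then show ?case using a0 a1 by simp
  next
    case (Suc j)
    have "d (a + int j + 2) = x * d (a + int j + 2 - 1) + c (a + int j + 2) * d (a + int j + 2 - 2)"
      by (rule r)
    also have "a + int j + 2 - 1 = a + int j + 1" by simp
    also have "a + int j + 2 - 2 = a + int j" by simp
    finally have "d (a + int j + 2) = 0" using Suc by simp
    then show ?case using Suc by (simp add: ac_simps)
  qed
  have bwd: "d (a - int j) = 0 \<and> d (a - int j + 1) = 0" for j
  proof (induction j)
    case 0 then show ?case using a0 a1 by simp
  next
    case (Suc j)
    have "d (a - int j + 1) = x * d (a - int j + 1 - 1) + c (a - int j + 1) * d (a - int j + 1 - 2)"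
      by (rule r)
    also have "a - int j + 1 - 1 = a - int j" by simp
    also have "a - int j + 1 - 2 = a - int (Suc j)" by simp
    finally have "c (a - int j + 1) * d (a - int (Suc j)) = 0" using Suc by simp
    then have "d (a - int (Suc j)) = 0" using c by simp
    moreover have "a - int (Suc j) + 1 = a - int j" by simp
    ultimately show ?case using Suc by simp
  qed
  show ?thesis
  proof (cases "n \<ge> a")
    case True
    then have "n = a + int (nat (n - a))" by simp
    then show ?thesis using fwd by metis
  next
    case False
    then have "n = a - int (nat (a - n))" by simp
    then show ?thesis using bwd by metis
  qed
qed

fun fw :: "(int \<Rightarrow> 'a::field) \<Rightarrow> 'a \<Rightarrow> nat \<Rightarrow> 'a \<times> 'a" where
  "fw c x 0 = (0, 1)"
| "fw c x (Suc j) = (snd (fw c x j), x * snd (fw c x j) + c (int j + 2) * fst (fw c x j))"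

fun bw :: "(int \<Rightarrow> 'a::field) \<Rightarrow> 'a \<Rightarrow> nat \<Rightarrow> 'a \<times> 'a" where
  "bw c x 0 = (0, 1)"
| "bw c x (Suc j) = ((snd (bw c x j) - x * fst (bw c x j)) / c (1 - int j), fst (bw c x j))"

definition gg :: "(int \<Rightarrow> 'a::field) \<Rightarrow> 'a \<Rightarrow> int \<Rightarrow> 'a" where
  "gg c x n = (if n \<ge> 0 then fst (fw c x (nat n)) else fst (bw c x (nat (-n))))"

lemma gg_pos: "gg c x (int j) = fst (fw c x j)" "gg c x (int j + 1) = snd (fw c x j)"
proof -
  show "gg c x (int j) = fst (fw c x j)" by (simp add: gg_def)
  have "nat (int j + 1) = Suc j" by simp
  then show "gg c x (int j + 1) = snd (fw c x j)" by (simp add: gg_def)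
qed

lemma gg_neg1: "gg c x (- int j) = fst (bw c x j)"
proof (cases j)
  case 0 then show ?thesis by (simp add: gg_def)
next
  case (Suc i)
  have "nat (- (- int j)) = j" by simp
  moreover have "\<not> (- int j \<ge> 0)" using Suc by simp
  ultimately show ?thesis unfolding gg_def by presburger
qed

lemma gg_neg2: "gg c x (1 - int j) = snd (bw c x j)"
proof (cases j)
  case 0 then show ?thesis by (simp add: gg_def)
next
  case (Suc i)
  then have "1 - int j = - int i" by simp
  then show ?thesis using Suc gg_neg1[of c x i] by simp
qed

lemmas gg_neg = gg_neg1 gg_neg2

lemma gg_rec:
  assumes c: "\<And>m. c m \<noteq> 0"
  shows "gg c x m = x * gg c x (m-1) + c m * gg c x (m-2)"
proof (cases "m \<ge> 2")
  case True
  define j where "j = nat (m - 2)"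
  have m: "m = int j + 2" using True j_def by simp
  have "m = int (Suc j) + 1" using m by simp
  then have "gg c x m = snd (fw c x (Suc j))" using gg_pos(2)[of c x "Suc j"] by metis
  also have "\<dots> = x * gg c x (int j + 1) + c m * gg c x (int j)"
    using gg_pos[of c x j] m by simp
  finally show ?thesis using m by (simp add: ac_simps)
next
  case False
  define j where "j = nat (1 - m)"
  have m: "m = 1 - int j" using False j_def by simp
  have "gg c x (m - 2) = fst (bw c x (Suc j))" using gg_neg(1)[of c x "Suc j"] m by simp
  also have "\<dots> = (gg c x m - x * gg c x (m - 1)) / c m"
    using gg_neg[of c x j] m by simp
  finally have e: "gg c x (m - 2) = (gg c x m - x * gg c x (m - 1)) / c m" .
  have "c m * gg c x (m - 2) = gg c x m - x * gg c x (m - 1)"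
    using e c[of m] by (simp add: eq_divide_eq mult.commute)
  then show ?thesis by (simp add: algebra_simps)
qed

lemma gg_01: "gg c x 0 = 0" "gg c x 1 = 1"
  by (simp_all add: gg_def)

lemma cf:
  fixes q x s :: "'a::field"
  assumes "q \<noteq> 0" "s \<noteq> 0"
  shows "carlitz_fib q 0 x s = 0 \<and> carlitz_fib q 1 x s = 1 \<and>
    (\<forall>m. carlitz_fib q m x s = x * carlitz_fib q (m - 1) x s
        + q powi (m - 2) * s * carlitz_fib q (m - 2) x s)"
proof -
  define c where "c = (\<lambda>m::int. q powi (m - 2) * s)"
  have cnz: "\<And>m. c m \<noteq> 0" using assms by (simp add: c_def)
  define P where "P = (\<lambda>g :: int \<Rightarrow> 'a. g 0 = 0 \<and> g 1 = 1 \<and>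
        (\<forall>m. g m = x * g (m - 1) + q powi (m - 2) * s * g (m - 2)))"
  have ex: "P (gg c x)" unfolding P_def
  proof (intro conjI allI)
    show "gg c x 0 = 0" "gg c x 1 = 1" by (rule gg_01)+
    fix m show "gg c x m = x * gg c x (m - 1) + q powi (m - 2) * s * gg c x (m - 2)"
      using gg_rec[of c x m, OF cnz] unfolding c_def .
  qed
  have un: "g = gg c x" if "P g" for g
  proof
    fix n
    have Pg: "\<forall>m. g m = x * g (m - 1) + q powi (m - 2) * s * g (m - 2)"
      using that unfolding P_def by (elim conjE)
    have Pgg: "\<forall>m. gg c x m = x * gg c x (m - 1) + q powi (m - 2) * s * gg c x (m - 2)"
      using ex unfolding P_def by (elim conjE)
    have r: "(\<lambda>m. g m - gg c x m) m = x * (\<lambda>m. g m - gg c x m) (m-1) + c m * (\<lambda>m. g m - gg c x m) (m-2)" for m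
    proof -
      have e1: "g m = x * g (m - 1) + q powi (m - 2) * s * g (m - 2)" using Pg by (rule spec)
      have e2: "gg c x m = x * gg c x (m - 1) + q powi (m - 2) * s * gg c x (m - 2)" using Pgg by (rule spec)
      have cm: "c m = q powi (m - 2) * s" by (simp add: c_def)
      show ?thesis unfolding e1 e2 cm by (simp add: algebra_simps)
    qed
    have g0: "g 0 = 0" "g 1 = 1"
      by (fact that[unfolded P_def, THEN conjunct1]) (fact that[unfolded P_def, THEN conjunct2, THEN conjunct1])
    have "(\<lambda>m. g m - gg c x m) n = 0"
      by (rule rec_unique[where a = 0, OF r cnz]) (simp_all add: g0 gg_01)
    then show "g n = gg c x n" by simp
  qed
  define T where "T = (THE g. P g)"
  have PT: "P T" unfolding T_def by (rule theI[of P, OF ex un])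
  have cfT: "carlitz_fib q n x s = T n" for n
    unfolding carlitz_fib_def T_def P_def ..
  show ?thesis unfolding cfT using PT unfolding P_def .
qed

lemma cf0: "q \<noteq> 0 \<Longrightarrow> s \<noteq> 0 \<Longrightarrow> carlitz_fib q 0 x s = 0"
  by (rule cf[THEN conjunct1])
lemma cf1: "q \<noteq> 0 \<Longrightarrow> s \<noteq> 0 \<Longrightarrow> carlitz_fib q 1 x s = 1"
  by (rule cf[THEN conjunct2, THEN conjunct1])

lemma powi_shift:
  fixes q :: "'a::field"
  assumes "q \<noteq> 0"
  shows "q powi (a - int k) * (q ^ k * s) = q powi a * s"
  using assms by (simp add: power_int_diff)

lemma v_Suc:
  fixes q s :: "'a::field"
  assumes "k \<ge> 1"
  shows "carlitz_v q s (Suc k) = - (q ^ k * s) * carlitz_v q s k"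
proof -
  have c: "Suc k choose 2 = k + (k choose 2)"
    by (simp add: numeral_2_eq_2)
  have cq: "q ^ (Suc k choose 2) = q ^ k * q ^ (k choose 2)" unfolding c by (simp add: power_add)
  obtain j where j: "k = Suc j" using assms by (cases k) auto
  have cs: "s ^ (Suc k - 1) = s * s ^ (k - 1)" using j by simp
  show ?thesis unfolding carlitz_v_def cq cs by (simp add: algebra_simps)
qed

lemma cass:
  fixes q x s :: "'a::field"
  assumes q: "q \<noteq> 0" and s: "s \<noteq> 0" and k: "k \<ge> 1"
  shows "carlitz_fib q (int k - 1) x (q * s) * carlitz_fib q (int k + 1) x s
       - carlitz_fib q (int k) x s * carlitz_fib q (int k) x (q * s) = carlitz_v q s k"
  using k
proof (induction k rule: nat_induct_at_least)
  case base
  have qs: "q * s \<noteq> 0" using q s by simp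
  have A: "carlitz_fib q 0 x s = 0" "carlitz_fib q 1 x s = 1" using cf0[OF q s] cf1[OF q s] by - assumption+
  have B: "carlitz_fib q 0 x (q*s) = 0" "carlitz_fib q 1 x (q*s) = 1" using cf0[OF q qs] cf1[OF q qs] by - assumption+
  show ?case using A B by (simp add: carlitz_v_def numeral_2_eq_2)
next
  case (Suc k)
  have qs: "q * s \<noteq> 0" using q s by simp
  define A where "A = (\<lambda>n. carlitz_fib q n x s)"
  define B where "B = (\<lambda>n. carlitz_fib q n x (q * s))"
  have rA: "\<And>m. A m = x * A (m - 1) + q powi (m - 2) * s * A (m - 2)"
    using cf[OF q s] unfolding A_def by blast
  have rB: "\<And>m. B m = x * B (m - 1) + q powi (m - 2) * (q * s) * B (m - 2)"
    using cf[OF q qs] unfolding B_def by blast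
  have IH: "B (int k - 1) * A (int k + 1) - A (int k) * B (int k) = carlitz_v q s k"
    using Suc.IH unfolding A_def B_def .
  have a2: "A (int k + 2) = x * A (int k + 1) + q ^ k * s * A (int k)"
    using rA[of "int k + 2"] by (simp add: ac_simps)
  have pw: "q powi (int k + 1 - 2) * (q * s) = q ^ k * s"
  proof -
    have "int k + 1 - 2 = int k - int 1" by simp
    then have "q powi (int k + 1 - 2) * (q * s) = q powi (int k - int 1) * (q ^ 1 * s)" by simp
    also have "\<dots> = q powi (int k) * s" by (rule powi_shift[OF q])
    finally show ?thesis by simp
  qed
  have b1: "B (int k + 1) = x * B (int k) + q ^ k * s * B (int k - 1)"
  proof -
    have e: "B (int k + 1) = x * B (int k + 1 - 1) + q ^ k * s * B (int k + 1 - 2)"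
      using rB[of "int k + 1"] unfolding pw .
    have e2: "int k + 1 - 1 = int k" "int k + 1 - 2 = int k - 1" by simp_all
    show ?thesis using e unfolding e2 .
  qed
  have "B (int (Suc k) - 1) * A (int (Suc k) + 1) - A (int (Suc k)) * B (int (Suc k))
      = B (int k) * A (int k + 2) - A (int k + 1) * B (int k + 1)"
    by (simp add: ac_simps)
  also have "\<dots> = - (q ^ k * s) * (B (int k - 1) * A (int k + 1) - A (int k) * B (int k))"
    unfolding a2 b1 by (simp add: algebra_simps)
  also have "\<dots> = carlitz_v q s (Suc k)" by (simp only: IH v_Suc[OF Suc.hyps])
  finally show ?case unfolding A_def B_def .
qed

theorem corollary2:
  fixes q x s :: "'a::field" and k :: nat and n :: int
  assumes "q \<noteq> 0" and "s \<noteq> 0" and "k \<ge> 1"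
  shows "carlitz_fib q (n - int k) x (q ^ k * s) =
    (1 / carlitz_v q s k) *
      (carlitz_fib q (int k - 1) x (q * s) * carlitz_fib q n x s
       - carlitz_fib q (int k) x s * carlitz_fib q (n - 1) x (q * s))"
proof -
  note q = assms(1) and s = assms(2)
  have qs: "q * s \<noteq> 0" using q s by simp
  have qks: "q ^ k * s \<noteq> 0" using q s by simp
  define A where "A = (\<lambda>n. carlitz_fib q n x s)"
  define B where "B = (\<lambda>n. carlitz_fib q n x (q * s))"
  define C where "C = (\<lambda>n. carlitz_fib q n x (q ^ k * s))"
  define v where "v = carlitz_v q s k"
  have vnz: "v \<noteq> 0" unfolding v_def carlitz_v_def using q s by simp
  have rA: "\<And>m. A m = x * A (m - 1) + q powi (m - 2) * s * A (m - 2)"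
    using cf[OF q s] unfolding A_def by blast
  have rB: "\<And>m. B m = x * B (m - 1) + q powi (m - 2) * (q * s) * B (m - 2)"
    using cf[OF q qs] unfolding B_def by blast
  have rC: "\<And>m. C m = x * C (m - 1) + q powi (m - 2) * (q ^ k * s) * C (m - 2)"
    using cf[OF q qks] unfolding C_def by blast
  have C01: "C 0 = 0" "C 1 = 1" using cf0[OF q qks] cf1[OF q qks] unfolding C_def by - assumption+
  define c where "c = (\<lambda>m::int. q powi (m - 2) * s)"
  have cnz: "\<And>m. c m \<noteq> 0" using q s by (simp add: c_def)
  define h1 where "h1 = (\<lambda>n. C (n - int k))"
  define h2 where "h2 = (\<lambda>n. (1 / v) * (B (int k - 1) * A n - A (int k) * B (n - 1)))"
  have r1: "h1 m = x * h1 (m - 1) + c m * h1 (m - 2)" for m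
  proof -
    have e0: "m - int k - 2 = m - 2 - int k" by simp
    have e: "q powi (m - int k - 2) * (q ^ k * s) = c m"
      unfolding e0 c_def by (rule powi_shift[OF q])
    have e1: "m - int k - 1 = m - 1 - int k" "m - int k - 2 = m - 2 - int k" by simp_all
    have "C (m - int k) = x * C (m - int k - 1) + q powi (m - int k - 2) * (q ^ k * s) * C (m - int k - 2)"
      by (rule rC)
    then have "C (m - int k) = x * C (m - 1 - int k) + c m * C (m - 2 - int k)"
      unfolding e unfolding e1 .
    then show ?thesis unfolding h1_def .
  qed
  define w where "w = 1 / v"
  have r2: "h2 m = x * h2 (m - 1) + c m * h2 (m - 2)" for m
  proof -
    have e0: "m - 1 - 2 = m - 2 - int 1" by simp
    have e: "q powi (m - 1 - 2) * (q * s) = c m"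
      using powi_shift[OF q, of "m - 2" 1 s] unfolding e0 c_def by simp
    have e1: "m - 1 - 1 = m - 2" "m - 1 - 2 = m - 3" "m - 2 - 1 = m - 3" by simp_all
    have "B (m - 1) = x * B (m - 1 - 1) + q powi (m - 1 - 2) * (q * s) * B (m - 1 - 2)"
      by (rule rB)
    then have bm: "B (m - 1) = x * B (m - 2) + c m * B (m - 3)"
      unfolding e unfolding e1 .
    have am: "A m = x * A (m - 1) + c m * A (m - 2)"
      using rA[of m] unfolding c_def by simp
    have h: "h2 n = w * (B (int k - 1) * A n - A (int k) * B (n - 1))" for n
      unfolding h2_def w_def by simp
    show ?thesis unfolding h am bm e1 by (simp add: algebra_simps)
  qed
  have d: "(\<lambda>m. h1 m - h2 m) n = 0"
  proof (rule rec_unique[where a = "int k"])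
    show "(\<lambda>m. h1 m - h2 m) m = x * (\<lambda>m. h1 m - h2 m) (m - 1) + c m * (\<lambda>m. h1 m - h2 m) (m - 2)" for m
      unfolding r1[of m] r2[of m] by (simp add: algebra_simps)
    show "c m \<noteq> 0" for m by (rule cnz)
    show "(\<lambda>m. h1 m - h2 m) (int k) = 0" unfolding h1_def h2_def using C01 by simp
    have "B (int k - 1) * A (int k + 1) - A (int k) * B (int k) = v"
      using cass[OF q s assms(3)] unfolding A_def B_def v_def .
    then show "(\<lambda>m. h1 m - h2 m) (int k + 1) = 0" unfolding h1_def h2_def using C01 vnz by simp
  qed
  then show ?thesis unfolding h1_def h2_def A_def B_def C_def v_def by simp
qed

end
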